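(* Let $\mathbb F$ be a field, $q\in\mathbb F$, $f,g\in\mathbb F[h]$. Then $\operatorname{GKdim}\mathcal H_q(f,g)=3$ if and only if $\deg f\le 1$. Moreover, if $\deg f>1$ then $\operatorname{GKdim}\mathcal H_q(f,g)\ge 4$.
   Context: $\mathcal H_q(f,g)$ denotes the unital associative $\mathbb F$-algebra generated by $x,y,h$ with relations $hx=xf(h)$, $yh=f(h)y$, $yx-qxy=g(h)$ (quantum generalized Heisenberg algebra). $\operatorname{GKdim}$ is Gelfand–Kirillov dimension. (Here $\deg f\le 1$ includes constant $f$.) *)

theory Defs
  imports "HOL-Computational_Algebra.Polynomial" "HOL-Library.Extended_Real"
begin

text \<open>Free associative algebra on the generators x, y, h over a field:
  elements are coefficient functions on words (finitely supported ones are the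
  genuine elements; the generated ideal below only contains such functions).\<close>

datatype gen = X | Y | H

type_synonym 'a falg = "gen list \<Rightarrow> 'a"

definition fa_word :: "gen list \<Rightarrow> 'a::zero_neq_one falg" where
  "fa_word u = (\<lambda>w. if w = u then 1 else 0)"

definition fa_add :: "'a::comm_ring_1 falg \<Rightarrow> 'a falg \<Rightarrow> 'a falg" where
  "fa_add p r = (\<lambda>w. p w + r w)"

definition fa_sub :: "'a::comm_ring_1 falg \<Rightarrow> 'a falg \<Rightarrow> 'a falg" where
  "fa_sub p r = (\<lambda>w. p w - r w)"

definition fa_smult :: "'a::comm_ring_1 \<Rightarrow> 'a falg \<Rightarrow> 'a falg" where
  "fa_smult c p = (\<lambda>w. c * p w)"

definition fa_mult :: "'a::comm_ring_1 falg \<Rightarrow> 'a falg \<Rightarrow> 'a falg" where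
  "fa_mult p r = (\<lambda>w. \<Sum>i\<le>length w. p (take i w) * r (drop i w))"

definition fa_poly_h :: "'a::comm_ring_1 poly \<Rightarrow> 'a falg" where
  "fa_poly_h p = (\<lambda>w. if w = replicate (length w) H then coeff p (length w) else 0)"

inductive_set ideal_gen :: "'a::comm_ring_1 falg set \<Rightarrow> 'a falg set" for R where
  rel: "r \<in> R \<Longrightarrow> r \<in> ideal_gen R"
| zero: "(\<lambda>_. 0) \<in> ideal_gen R"
| add: "a \<in> ideal_gen R \<Longrightarrow> b \<in> ideal_gen R \<Longrightarrow> fa_add a b \<in> ideal_gen R"
| smult: "a \<in> ideal_gen R \<Longrightarrow> fa_smult c a \<in> ideal_gen R"
| lmult: "a \<in> ideal_gen R \<Longrightarrow> fa_mult (fa_word u) a \<in> ideal_gen R"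
| rmult: "a \<in> ideal_gen R \<Longrightarrow> fa_mult a (fa_word u) \<in> ideal_gen R"

definition Hq_rels :: "'a::field \<Rightarrow> 'a poly \<Rightarrow> 'a poly \<Rightarrow> 'a falg set" where
  "Hq_rels q f g =
     { fa_sub (fa_word [H, X]) (fa_mult (fa_word [X]) (fa_poly_h f)),
       fa_sub (fa_word [Y, H]) (fa_mult (fa_poly_h f) (fa_word [Y])),
       fa_sub (fa_sub (fa_word [Y, X]) (fa_smult q (fa_word [X, Y]))) (fa_poly_h g) }"

definition indep_mod :: "'a::field falg set \<Rightarrow> gen list set \<Rightarrow> bool" where
  "indep_mod I W \<longleftrightarrow>
     (\<forall>c. (\<forall>w. w \<notin> W \<longrightarrow> c w = 0) \<longrightarrow> c \<in> I \<longrightarrow> (\<forall>w\<in>W. c w = 0))"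

text \<open>d(n) = dim of the image of the span of words of length \<le> n (generating
  subspace V = span{1,x,y,h}, so this is dim of sum of V^k, k \<le> n) in the
  quotient algebra: the maximal number of such words independent modulo I.\<close>
definition growth :: "'a::field falg set \<Rightarrow> nat \<Rightarrow> nat" where
  "growth I n = Max {card W | W. W \<subseteq> {w. length w \<le> n} \<and> indep_mod I W}"

definition GKdim_pres :: "'a::field falg set \<Rightarrow> ereal" where
  "GKdim_pres I = limsup (\<lambda>n. ereal (ln (real (growth I n)) / ln (real n)))"

definition GKdim_Hq :: "'a::field \<Rightarrow> 'a poly \<Rightarrow> 'a poly \<Rightarrow> ereal" where
  "GKdim_Hq q f g = GKdim_pres (ideal_gen (Hq_rels q f g))"

end

theory Submission
  imports Defs "HOL-Real_Asymp.Real_Asymp"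
begin


definition supp :: "'a::zero falg \<Rightarrow> gen list set" where
  "supp p = {w. p w \<noteq> 0}"

definition lsum :: "'b set \<Rightarrow> ('b \<Rightarrow> 'a::comm_ring_1 falg) \<Rightarrow> 'a falg" where
  "lsum S F = (\<lambda>w. \<Sum>s\<in>S. F s w)"

lemma fa_mult_word_left:
  "fa_mult (fa_word u) p = (\<lambda>w. if length u \<le> length w \<and> take (length u) w = u then p (drop (length u) w) else 0)"
proof (rule ext)
  fix w
  have "fa_mult (fa_word u) p w = (\<Sum>i\<le>length w. if i = length u \<and> take (length u) w = u then p (drop (length u) w) else 0)"
    unfolding fa_mult_def fa_word_def
    by (rule sum.cong) (auto)
  also have "\<dots> = (if length u \<le> length w \<and> take (length u) w = u then p (drop (length u) w) else 0)"
    by (cases "take (length u) w = u") (auto simp: sum.delta)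
  finally show "fa_mult (fa_word u) p w = (if length u \<le> length w \<and> take (length u) w = u then p (drop (length u) w) else 0)" .
qed

lemma fa_mult_word_right:
  "fa_mult p (fa_word v) = (\<lambda>w. if length v \<le> length w \<and> drop (length w - length v) w = v then p (take (length w - length v) w) else 0)"
proof (rule ext)
  fix w
  have "fa_mult p (fa_word v) w = (\<Sum>i\<le>length w. if i = length w - length v \<and> length v \<le> length w \<and> drop (length w - length v) w = v then p (take (length w - length v) w) else 0)"
    unfolding fa_mult_def fa_word_def
    by (rule sum.cong) auto
  also have "\<dots> = (if length v \<le> length w \<and> drop (length w - length v) w = v then p (take (length w - length v) w) else 0)"
    by (cases "length v \<le> length w \<and> drop (length w - length v) w = v") (auto simp: sum.delta)
  finally show "fa_mult p (fa_word v) w = (if length v \<le> length w \<and> drop (length w - length v) w = v then p (take (length w - length v) w) else 0)" .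
qed

lemma fa_mult_words: "fa_mult (fa_word u) (fa_word v) = (fa_word (u @ v) :: 'a::comm_ring_1 falg)"
  unfolding fa_mult_word_left
  by (rule ext) (auto simp: fa_word_def append_eq_conv_conj, metis append_take_drop_id)

lemma fa_mult_lsum_left: "fa_mult (lsum S F) r = lsum S (\<lambda>s. fa_mult (F s) r)"
  unfolding fa_mult_def lsum_def
  by (rule ext) (simp add: sum_distrib_right sum.swap[of _ S])

lemma fa_mult_lsum_right: "fa_mult r (lsum S F) = lsum S (\<lambda>s. fa_mult r (F s))"
  unfolding fa_mult_def lsum_def
  by (rule ext) (simp add: sum_distrib_left sum.swap[of _ S])

lemma fa_mult_smult_left: "fa_mult (fa_smult c p) r = fa_smult c (fa_mult p r)"
  unfolding fa_mult_def fa_smult_def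
  by (rule ext) (simp add: sum_distrib_left mult.assoc)

lemma fa_mult_smult_right: "fa_mult r (fa_smult c p) = fa_smult c (fa_mult r p)"
  unfolding fa_mult_def fa_smult_def
  by (rule ext) (simp add: sum_distrib_left mult.left_commute)

lemma fa_mult_sub_left: "fa_mult (fa_sub p p') r = fa_sub (fa_mult p r) (fa_mult p' r)"
  unfolding fa_mult_def fa_sub_def
  by (rule ext) (simp add: left_diff_distrib sum_subtractf)

lemma fa_mult_sub_right: "fa_mult r (fa_sub p p') = fa_sub (fa_mult r p) (fa_mult r p')"
  unfolding fa_mult_def fa_sub_def
  by (rule ext) (simp add: right_diff_distrib sum_subtractf)

lemma fa_mult_add_right: "fa_mult r (fa_add p p') = fa_add (fa_mult r p) (fa_mult r p')"
  unfolding fa_mult_def fa_add_def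
  by (rule ext) (simp add: distrib_left sum.distrib)

lemma lsum_smult_word: "lsum S (\<lambda>s. fa_smult (c s) (fa_word (u s))) =
  (\<lambda>w. \<Sum>s\<in>S. if w = u s then c s else 0)"
  unfolding lsum_def fa_smult_def fa_word_def by (rule ext) (rule sum.cong, auto)

lemma fa_poly_h_lsum:
  fixes p :: "'a::comm_ring_1 poly"
  assumes "degree p \<le> N"
  shows "fa_poly_h p = lsum {..N} (\<lambda>k. fa_smult (coeff p k) (fa_word (replicate k H)))"
proof (rule ext)
  fix w :: "gen list"
  show "fa_poly_h p w = lsum {..N} (\<lambda>k. fa_smult (coeff p k) (fa_word (replicate k H))) w"
  proof (cases "w = replicate (length w) H")
    case True
    have "lsum {..N} (\<lambda>k. fa_smult (coeff p k) (fa_word (replicate k H))) w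
       = (\<Sum>k\<in>{..N}. if k = length w then coeff p k else 0)"
      unfolding lsum_def fa_smult_def fa_word_def
      by (rule sum.cong) (use True in auto)
    also have "\<dots> = coeff p (length w)"
      using assms by (auto simp: sum.delta coeff_eq_0)
    finally show ?thesis using True by (simp add: fa_poly_h_def)
  next
    case False
    have "lsum {..N} (\<lambda>k. fa_smult (coeff p k) (fa_word (replicate k H))) w = 0"
      unfolding lsum_def fa_smult_def fa_word_def
      by (rule sum.neutral) (use False in auto)
    then show ?thesis using False by (simp add: fa_poly_h_def)
  qed
qed

lemma lsum_cong: "(\<And>s. s \<in> S \<Longrightarrow> F s = G s) \<Longrightarrow> lsum S F = lsum S G"
  unfolding lsum_def by (rule ext) (rule sum.cong, auto)

lemma lsum_mult_word_right:
  "fa_mult (lsum S (\<lambda>s. fa_smult (c s) (fa_word (u s)))) (fa_word v) = lsum S (\<lambda>s. fa_smult (c s) (fa_word (u s @ v)))"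
  by (simp add: fa_mult_lsum_left fa_mult_smult_left fa_mult_words)

lemma lsum_mult_word_left:
  "fa_mult (fa_word v) (lsum S (\<lambda>s. fa_smult (c s) (fa_word (u s)))) = lsum S (\<lambda>s. fa_smult (c s) (fa_word (v @ u s)))"
  by (simp add: fa_mult_lsum_right fa_mult_smult_right fa_mult_words)

lemma fa_sub_as_add: "fa_sub a b = fa_add a (fa_smult (-1) b)"
  unfolding fa_sub_def fa_add_def fa_smult_def by auto

lemma ideal_sub: "a \<in> ideal_gen R \<Longrightarrow> b \<in> ideal_gen R \<Longrightarrow> fa_sub a b \<in> ideal_gen R"
  unfolding fa_sub_as_add by (intro ideal_gen.add ideal_gen.smult)

lemma ideal_lsum: "finite S \<Longrightarrow> (\<And>s. s \<in> S \<Longrightarrow> F s \<in> ideal_gen R) \<Longrightarrow> lsum S F \<in> ideal_gen R"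
proof (induction S rule: finite_induct)
  case empty
  then show ?case using ideal_gen.zero by (simp add: lsum_def)
next
  case (insert x S)
  have "lsum (insert x S) F = fa_add (F x) (lsum S F)"
    using insert by (auto simp: lsum_def fa_add_def)
  then show ?case using insert by (auto intro: ideal_gen.add)
qed


definition pbw :: "nat \<Rightarrow> nat \<Rightarrow> nat \<Rightarrow> gen list" where
  "pbw a b c = replicate a X @ replicate b H @ replicate c Y"

definition PBW :: "nat \<Rightarrow> nat \<Rightarrow> gen list set" where
  "PBW M m = {pbw a b c | a b c. M*a + b + M*c \<le> m}"

definition Good :: "'a::comm_ring_1 falg set \<Rightarrow> nat \<Rightarrow> nat \<Rightarrow> 'a falg \<Rightarrow> bool" where
  "Good I M m p \<longleftrightarrow> (\<exists>c. (\<forall>w. c w \<noteq> 0 \<longrightarrow> w \<in> PBW M m) \<and> fa_sub p c \<in> I)"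

lemma PBW_sub: assumes "M \<ge> 1" shows "PBW M m \<subseteq> (\<lambda>(a,b,c). pbw a b c) ` ({..m} \<times> {..m} \<times> {..m})"
proof
  fix w assume "w \<in> PBW M m"
  then obtain a b c where w: "w = pbw a b c" "M*a + b + M*c \<le> m" unfolding PBW_def by blast
  have 1: "a \<le> M*a" "c \<le> M*c" using assms by auto
  have "a \<le> m" "b \<le> m" "c \<le> m" using w(2) 1 by linarith+
  then have "(a,b,c) \<in> {..m} \<times> {..m} \<times> {..m}" by auto
  then show "w \<in> (\<lambda>(a,b,c). pbw a b c) ` ({..m} \<times> {..m} \<times> {..m})" unfolding w(1) by (rule rev_image_eqI) simp
qed

lemma PBW_finite: "M \<ge> 1 \<Longrightarrow> finite (PBW M m)"
  by (rule finite_subset[OF PBW_sub]) auto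

lemma PBW_card: assumes "M \<ge> 1" shows "card (PBW M m) \<le> (m+1)^3"
proof -
  have "card (PBW M m) \<le> card ((\<lambda>(a,b,c). pbw a b c) ` ({..m} \<times> {..m} \<times> {..m}))"
    by (rule card_mono[OF _ PBW_sub[OF assms]]) auto
  also have "\<dots> \<le> card ({..m} \<times> {..m} \<times> {..m})" by (rule card_image_le) auto
  also have "\<dots> = (m+1)^3" by (simp add: card_cartesian_product power3_eq_cube)
  finally show ?thesis .
qed

lemma PBW_mono: "m \<le> m' \<Longrightarrow> PBW M m \<subseteq> PBW M m'"
  unfolding PBW_def by fastforce

lemma pbw_in_PBW: "M*a + b + M*c \<le> m \<Longrightarrow> pbw a b c \<in> PBW M m"
  unfolding PBW_def by blast

lemma Good_mono: "Good I M m p \<Longrightarrow> m \<le> m' \<Longrightarrow> Good I M m' p"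
  unfolding Good_def using PBW_mono by blast

lemma Good_word: "w \<in> PBW M m \<Longrightarrow> Good (ideal_gen R) M m (fa_word w)"
  unfolding Good_def
  apply (rule exI[of _ "fa_word w"])
  using ideal_gen.zero[of R] by (auto simp: fa_word_def fa_sub_def)

lemma Good_word_pbw: "M*a + b + M*c \<le> m \<Longrightarrow> Good (ideal_gen R) M m (fa_word (pbw a b c))"
  by (rule Good_word) (rule pbw_in_PBW)

lemma Good_trans: assumes "fa_sub p r \<in> ideal_gen R" "Good (ideal_gen R) M m r"
  shows "Good (ideal_gen R) M m p"
proof -
  obtain c where c: "\<forall>w. c w \<noteq> 0 \<longrightarrow> w \<in> PBW M m" "fa_sub r c \<in> ideal_gen R"
    using assms(2) unfolding Good_def by blast
  have "fa_sub p c = fa_add (fa_sub p r) (fa_sub r c)" by (auto simp: fa_sub_def fa_add_def)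
  then have "fa_sub p c \<in> ideal_gen R" using assms(1) c(2) by (simp add: ideal_gen.add)
  then show ?thesis using c(1) unfolding Good_def by blast
qed

lemma Good_add: assumes "Good (ideal_gen R) M m p" "Good (ideal_gen R) M m r"
  shows "Good (ideal_gen R) M m (fa_add p r)"
proof -
  obtain c where c: "\<forall>w. c w \<noteq> 0 \<longrightarrow> w \<in> PBW M m" "fa_sub p c \<in> ideal_gen R"
    using assms(1) unfolding Good_def by blast
  obtain d where d: "\<forall>w. d w \<noteq> 0 \<longrightarrow> w \<in> PBW M m" "fa_sub r d \<in> ideal_gen R"
    using assms(2) unfolding Good_def by blast
  have "fa_sub (fa_add p r) (fa_add c d) = fa_add (fa_sub p c) (fa_sub r d)"
    by (auto simp: fa_sub_def fa_add_def)
  then have "fa_sub (fa_add p r) (fa_add c d) \<in> ideal_gen R" using c d by (simp add: ideal_gen.add)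
  moreover have "\<forall>w. fa_add c d w \<noteq> 0 \<longrightarrow> w \<in> PBW M m" using c d unfolding fa_add_def by (metis add.right_neutral)
  ultimately show ?thesis unfolding Good_def by blast
qed

lemma Good_smult: assumes "Good (ideal_gen R) M m p"
  shows "Good (ideal_gen R) M m (fa_smult k p)"
proof -
  obtain c where c: "\<forall>w. c w \<noteq> 0 \<longrightarrow> w \<in> PBW M m" "fa_sub p c \<in> ideal_gen R"
    using assms(1) unfolding Good_def by blast
  have "fa_sub (fa_smult k p) (fa_smult k c) = fa_smult k (fa_sub p c)"
    by (auto simp: fa_sub_def fa_smult_def right_diff_distrib)
  then have "fa_sub (fa_smult k p) (fa_smult k c) \<in> ideal_gen R" using c by (simp add: ideal_gen.smult)
  moreover have "\<forall>w. fa_smult k c w \<noteq> 0 \<longrightarrow> w \<in> PBW M m" using c unfolding fa_smult_def by (metis mult_zero_right)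
  ultimately show ?thesis unfolding Good_def by blast
qed

lemma Good_zero: "Good (ideal_gen R) M m (\<lambda>_. 0)"
  unfolding Good_def
  apply (rule exI[of _ "\<lambda>_. 0"])
  using ideal_gen.zero[of R] by (auto simp: fa_sub_def)

lemma Good_lsum: "finite S \<Longrightarrow> (\<And>s. s \<in> S \<Longrightarrow> Good (ideal_gen R) M m (F s)) \<Longrightarrow> Good (ideal_gen R) M m (lsum S F)"
proof (induction S rule: finite_induct)
  case empty
  then show ?case using Good_zero by (simp add: lsum_def)
next
  case (insert x S)
  have "lsum (insert x S) F = fa_add (F x) (lsum S F)"
    using insert by (auto simp: lsum_def fa_add_def)
  then show ?case using insert by (auto intro: Good_add)
qed

lemma Good_trans2: assumes "fa_sub (fa_sub p r1) r2 \<in> ideal_gen R" "Good (ideal_gen R) M m r1" "Good (ideal_gen R) M m r2"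
  shows "Good (ideal_gen R) M m p"
proof -
  have "fa_sub p (fa_add r1 r2) = fa_sub (fa_sub p r1) r2" by (auto simp: fa_sub_def fa_add_def)
  moreover have "Good (ideal_gen R) M m (fa_add r1 r2)" using assms(2,3) by (rule Good_add)
  ultimately show ?thesis using assms(1) Good_trans by metis
qed

lemma expand_supported:
  assumes "\<forall>w. c w \<noteq> 0 \<longrightarrow> w \<in> S" "finite S"
  shows "c = lsum S (\<lambda>t. fa_smult (c t) (fa_word t))"
proof (rule ext)
  fix w
  have "lsum S (\<lambda>t. fa_smult (c t) (fa_word t)) w = (\<Sum>t\<in>S. if t = w then c w else 0)"
    unfolding lsum_def fa_smult_def fa_word_def by (rule sum.cong) auto
  also have "\<dots> = c w" using assms by (cases "w \<in> S") (auto simp: sum.delta')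
  finally show "c w = lsum S (\<lambda>t. fa_smult (c t) (fa_word t)) w" by simp
qed

lemma Good_mult_word:
  assumes M: "M \<ge> 1" and G: "Good (ideal_gen R) M m p"
    and L: "\<And>t. t \<in> PBW M m \<Longrightarrow> Good (ideal_gen R) M m' (fa_word (z # t))"
  shows "Good (ideal_gen R) M m' (fa_mult (fa_word [z]) p)"
proof -
  obtain c where c: "\<forall>w. c w \<noteq> 0 \<longrightarrow> w \<in> PBW M m" "fa_sub p c \<in> ideal_gen R"
    using G unfolding Good_def by blast
  have "fa_sub (fa_mult (fa_word [z]) p) (fa_mult (fa_word [z]) c) = fa_mult (fa_word [z]) (fa_sub p c)"
    by (simp add: fa_mult_sub_right)
  then have 1: "fa_sub (fa_mult (fa_word [z]) p) (fa_mult (fa_word [z]) c) \<in> ideal_gen R"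
    using c(2) by (simp add: ideal_gen.lmult)
  have e: "c = lsum (PBW M m) (\<lambda>t. fa_smult (c t) (fa_word t))"
    by (rule expand_supported[OF c(1) PBW_finite[OF M]])
  have "fa_mult (fa_word [z]) c = fa_mult (fa_word [z]) (lsum (PBW M m) (\<lambda>t. fa_smult (c t) (fa_word t)))"
    by (rule arg_cong[OF e])
  also have "\<dots> = lsum (PBW M m) (\<lambda>t. fa_smult (c t) (fa_word (z # t)))"
    by (simp only: lsum_mult_word_left append_Cons append_Nil)
  finally have "fa_mult (fa_word [z]) c = lsum (PBW M m) (\<lambda>t. fa_smult (c t) (fa_word (z # t)))" .
  moreover have "Good (ideal_gen R) M m' \<dots>"
    using PBW_finite[OF M] L by (intro Good_lsum Good_smult) auto
  ultimately show ?thesis using Good_trans[OF 1] by simp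
qed


context
  fixes q :: "'a::field" and f g :: "'a poly"
begin

abbreviation "II \<equiv> ideal_gen (Hq_rels q f g)"

lemma rel_in: "r \<in> Hq_rels q f g \<Longrightarrow> fa_mult r (fa_word v) \<in> II"
  by (rule ideal_gen.rmult) (rule ideal_gen.rel)

lemma R1: assumes "degree f \<le> N"
  shows "fa_sub (fa_word (H#X#v)) (lsum {..N} (\<lambda>k. fa_smult (coeff f k) (fa_word (X # replicate k H @ v)))) \<in> II"
proof -
  let ?r = "fa_sub (fa_word [H, X]) (fa_mult (fa_word [X]) (fa_poly_h f))"
  have "?r \<in> Hq_rels q f g" unfolding Hq_rels_def by simp
  then have "fa_mult ?r (fa_word v) \<in> II" by (rule rel_in)
  moreover have "fa_mult ?r (fa_word v) = fa_sub (fa_word (H#X#v)) (lsum {..N} (\<lambda>k. fa_smult (coeff f k) (fa_word (X # replicate k H @ v))))"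
    unfolding fa_mult_sub_left fa_poly_h_lsum[OF assms] lsum_mult_word_left lsum_mult_word_right fa_mult_words
    by simp
  ultimately show ?thesis by simp
qed

lemma R2: assumes "degree f \<le> N"
  shows "fa_sub (fa_word (Y#H#v)) (lsum {..N} (\<lambda>k. fa_smult (coeff f k) (fa_word (replicate k H @ Y # v)))) \<in> II"
proof -
  let ?r = "fa_sub (fa_word [Y, H]) (fa_mult (fa_poly_h f) (fa_word [Y]))"
  have "?r \<in> Hq_rels q f g" unfolding Hq_rels_def by simp
  then have "fa_mult ?r (fa_word v) \<in> II" by (rule rel_in)
  moreover have "fa_mult ?r (fa_word v) = fa_sub (fa_word (Y#H#v)) (lsum {..N} (\<lambda>k. fa_smult (coeff f k) (fa_word (replicate k H @ Y # v))))"
    unfolding fa_mult_sub_left fa_poly_h_lsum[OF assms] lsum_mult_word_left lsum_mult_word_right fa_mult_words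
    by simp
  ultimately show ?thesis by simp
qed

lemma R3: assumes "degree g \<le> N"
  shows "fa_sub (fa_sub (fa_word (Y#X#v)) (fa_smult q (fa_word (X#Y#v))))
     (lsum {..N} (\<lambda>k. fa_smult (coeff g k) (fa_word (replicate k H @ v)))) \<in> II"
proof -
  let ?r = "fa_sub (fa_sub (fa_word [Y, X]) (fa_smult q (fa_word [X, Y]))) (fa_poly_h g)"
  have "?r \<in> Hq_rels q f g" unfolding Hq_rels_def by simp
  then have "fa_mult ?r (fa_word v) \<in> II" by (rule rel_in)
  moreover have "fa_mult ?r (fa_word v) = fa_sub (fa_sub (fa_word (Y#X#v)) (fa_smult q (fa_word (X#Y#v))))
     (lsum {..N} (\<lambda>k. fa_smult (coeff g k) (fa_word (replicate k H @ v))))"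
    unfolding fa_mult_sub_left fa_mult_smult_left fa_poly_h_lsum[OF assms] lsum_mult_word_right fa_mult_words
    by simp
  ultimately show ?thesis by simp
qed

end


definition Mg :: "'a::zero poly \<Rightarrow> nat" where "Mg g = max 1 (degree g)"

lemma Mg_ge1: "Mg g \<ge> 1" unfolding Mg_def by simp
lemma Mg_ge: "degree g \<le> Mg g" unfolding Mg_def by simp

lemma pbw_simps: "pbw (Suc a) b c = X # pbw a b c" "pbw 0 (Suc b) c = H # pbw 0 b c"
  "pbw 0 0 (Suc c) = Y # pbw 0 0 c" "pbw 0 0 0 = []"
  by (simp_all add: pbw_def)

declare fa_mult_words[simp]

context
  fixes q :: "'a::field" and f g :: "'a poly"
begin

abbreviation "GG \<equiv> Good (ideal_gen (Hq_rels q f g)) (Mg g)"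

lemma PBW_elim: "t \<in> PBW M m \<Longrightarrow> (\<And>a b c. t = pbw a b c \<Longrightarrow> M*a + b + M*c \<le> m \<Longrightarrow> P) \<Longrightarrow> P"
  unfolding PBW_def by blast

lemma MX: assumes "GG m p" shows "GG (m + Mg g) (fa_mult (fa_word [X]) p)"
proof (rule Good_mult_word[OF Mg_ge1 assms])
  fix t assume "t \<in> PBW (Mg g) m"
  then obtain a b c where t: "t = pbw a b c" "Mg g*a + b + Mg g*c \<le> m" by (rule PBW_elim)
  have "X # t = pbw (Suc a) b c" using t by (simp add: pbw_simps)
  moreover have "Mg g * Suc a + b + Mg g * c \<le> m + Mg g" using t by simp
  ultimately show "GG (m + Mg g) (fa_word (X # t))" by (simp add: Good_word_pbw)
qed

lemma MHk: assumes "GG m (fa_word t)" "(\<And>m p. GG m p \<Longrightarrow> GG (m+1) (fa_mult (fa_word [H]) p))"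
  shows "GG (m + k) (fa_word (replicate k H @ t))"
proof (induction k)
  case 0
  then show ?case using assms by simp
next
  case (Suc k)
  have "fa_word (replicate (Suc k) H @ t) = fa_mult (fa_word [H]) (fa_word (replicate k H @ t))"
    by (simp add: fa_mult_words)
  then show ?case using assms(2)[OF Suc] by simp
qed

context
  assumes df: "degree f \<le> 1"
begin

lemma LH: "GG (Mg g*a + b + Mg g*c + 1) (fa_word (H # pbw a b c))"
proof (induction a)
  case 0
  have "H # pbw 0 b c = pbw 0 (Suc b) c" by (simp add: pbw_simps)
  then show ?case by (simp add: Good_word_pbw)
next
  case (Suc a)
  let ?m = "Mg g * Suc a + b + Mg g * c + 1"
  have r: "fa_sub (fa_word (H#X#pbw a b c)) (lsum {..1} (\<lambda>k. fa_smult (coeff f k) (fa_word (X # replicate k H @ pbw a b c)))) \<in> ideal_gen (Hq_rels q f g)"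
    by (rule R1[OF df])
  have "GG ?m (lsum {..1} (\<lambda>k. fa_smult (coeff f k) (fa_word (X # replicate k H @ pbw a b c))))"
  proof (intro Good_lsum Good_smult)
    fix k :: nat assume "k \<in> {..1}"
    then have "k = 0 \<or> k = 1" by auto
    then show "GG ?m (fa_word (X # replicate k H @ pbw a b c))"
    proof
      assume "k = 0"
      then show ?thesis by (simp add: pbw_simps(1)[symmetric] Good_word_pbw del: pbw_simps)
    next
      assume k: "k = 1"
      have "fa_word (X # replicate k H @ pbw a b c) = fa_mult (fa_word [X]) (fa_word (H # pbw a b c))"
        using k by (simp add: fa_mult_words)
      moreover have "GG (Mg g*a + b + Mg g*c + 1 + Mg g) (fa_mult (fa_word [X]) (fa_word (H # pbw a b c)))"
        by (rule MX[OF Suc])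
      ultimately show ?thesis using k by (simp add: algebra_simps)
    qed
  qed simp
  then show ?case using Good_trans[OF r] by (simp add: pbw_simps)
qed

lemma MH: assumes "GG m p" shows "GG (m + 1) (fa_mult (fa_word [H]) p)"
proof (rule Good_mult_word[OF Mg_ge1 assms])
  fix t assume "t \<in> PBW (Mg g) m"
  then obtain a b c where t: "t = pbw a b c" "Mg g*a + b + Mg g*c \<le> m" by (rule PBW_elim)
  show "GG (m + 1) (fa_word (H # t))"
    using Good_mono[OF LH[of a b c]] t by simp
qed

lemma LY0: "GG (b + Mg g*c + Mg g) (fa_word (Y # pbw 0 b c))"
proof (induction b)
  case 0
  have "Y # pbw 0 0 c = pbw 0 0 (Suc c)" by (simp add: pbw_simps pbw_def)
  then show ?case by (simp add: Good_word_pbw)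
next
  case (Suc b)
  let ?m = "Suc b + Mg g * c + Mg g"
  have r: "fa_sub (fa_word (Y#H#pbw 0 b c)) (lsum {..1} (\<lambda>k. fa_smult (coeff f k) (fa_word (replicate k H @ Y # pbw 0 b c)))) \<in> ideal_gen (Hq_rels q f g)"
    by (rule R2[OF df])
  have "GG ?m (lsum {..1} (\<lambda>k. fa_smult (coeff f k) (fa_word (replicate k H @ Y # pbw 0 b c))))"
  proof (intro Good_lsum Good_smult)
    fix k :: nat assume "k \<in> {..1}"
    then have "k \<le> 1" by auto
    have "GG (b + Mg g * c + Mg g + k) (fa_word (replicate k H @ Y # pbw 0 b c))"
      by (rule MHk[OF Suc MH])
    then show "GG ?m (fa_word (replicate k H @ Y # pbw 0 b c))"
      by (rule Good_mono) (use \<open>k \<le> 1\<close> in simp)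
  qed simp
  then show ?case using Good_trans[OF r] by (simp add: pbw_simps)
qed

lemma LY: "GG (Mg g*a + b + Mg g*c + Mg g) (fa_word (Y # pbw a b c))"
proof (induction a)
  case 0
  then show ?case using LY0 by simp
next
  case (Suc a)
  let ?m = "Mg g * Suc a + b + Mg g * c + Mg g"
  have r: "fa_sub (fa_sub (fa_word (Y#X#pbw a b c)) (fa_smult q (fa_word (X#Y#pbw a b c))))
     (lsum {..degree g} (\<lambda>k. fa_smult (coeff g k) (fa_word (replicate k H @ pbw a b c)))) \<in> ideal_gen (Hq_rels q f g)"
    by (rule R3) simp
  have 1: "GG ?m (fa_smult q (fa_word (X#Y#pbw a b c)))"
  proof (rule Good_smult)
    have "fa_word (X#Y#pbw a b c) = fa_mult (fa_word [X]) (fa_word (Y # pbw a b c))"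
      by (simp add: fa_mult_words)
    moreover have "GG (Mg g*a + b + Mg g*c + Mg g + Mg g) (fa_mult (fa_word [X]) (fa_word (Y # pbw a b c)))"
      by (rule MX[OF Suc])
    ultimately show "GG ?m (fa_word (X#Y#pbw a b c))" by (simp add: algebra_simps)
  qed
  have 2: "GG ?m (lsum {..degree g} (\<lambda>k. fa_smult (coeff g k) (fa_word (replicate k H @ pbw a b c))))"
  proof (intro Good_lsum Good_smult)
    fix k :: nat assume "k \<in> {..degree g}"
    then have "k \<le> Mg g" using Mg_ge[of g] by auto
    have "GG (Mg g*a + b + Mg g*c + k) (fa_word (replicate k H @ pbw a b c))"
      by (rule MHk[OF Good_word_pbw MH]) simp
    then show "GG ?m (fa_word (replicate k H @ pbw a b c))"
      by (rule Good_mono) (use \<open>k \<le> Mg g\<close> in simp)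
  qed simp
  show ?case using Good_trans2[OF r 1 2] by (simp add: pbw_simps)
qed

lemma MY: assumes "GG m p" shows "GG (m + Mg g) (fa_mult (fa_word [Y]) p)"
proof (rule Good_mult_word[OF Mg_ge1 assms])
  fix t assume "t \<in> PBW (Mg g) m"
  then obtain a b c where t: "t = pbw a b c" "Mg g*a + b + Mg g*c \<le> m" by (rule PBW_elim)
  show "GG (m + Mg g) (fa_word (Y # t))"
    using Good_mono[OF LY[of a b c]] t by simp
qed

lemma all_words_good: "GG (Mg g * length w) (fa_word w)"
proof (induction w)
  case Nil
  have "[] = pbw 0 0 0" by (simp add: pbw_def)
  then show ?case using Good_word_pbw[of "Mg g" 0 0 0 0] by simp
next
  case (Cons z w)
  have e: "fa_word (z # w) = fa_mult (fa_word [z]) (fa_word w)" by (simp add: fa_mult_words)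
  have le: "1 \<le> Mg g" by (rule Mg_ge1)
  show ?case
  proof (cases z)
    case X
    then show ?thesis using MX[OF Cons] e by (simp add: add.commute)
  next
    case Y
    then show ?thesis using MY[OF Cons] e by (simp add: add.commute)
  next
    case H
    then show ?thesis using Good_mono[OF MH[OF Cons]] e le by simp
  qed
qed

end
end


lemma dep_lemma:
  fixes v :: "'j \<Rightarrow> 'b \<Rightarrow> 'a::field"
  assumes "finite S"
  shows "finite J \<Longrightarrow> card S < card J \<Longrightarrow> (\<forall>j\<in>J. \<forall>s. v j s \<noteq> 0 \<longrightarrow> s \<in> S) \<Longrightarrow>
    \<exists>l. (\<exists>j\<in>J. l j \<noteq> 0) \<and> (\<forall>s. (\<Sum>j\<in>J. l j * v j s) = 0)"
  using assms
proof (induction S arbitrary: J v rule: finite_induct)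
  case empty
  then obtain j0 where "j0 \<in> J" by fastforce
  then show ?case using empty
    by (intro exI[of _ "\<lambda>j. if j = j0 then 1 else 0"]) auto
next
  case (insert s0 S)
  show ?case
  proof (cases "\<forall>j\<in>J. v j s0 = 0")
    case True
    have "\<forall>j\<in>J. \<forall>s. v j s \<noteq> 0 \<longrightarrow> s \<in> S" using True insert.prems(3) by blast
    moreover have "card S < card J" using insert by simp
    ultimately show ?thesis using insert.IH insert.prems(1) by blast
  next
    case False
    then obtain j0 where j0: "j0 \<in> J" "v j0 s0 \<noteq> 0" by blast
    define J' where "J' = J - {j0}"
    define v' where "v' = (\<lambda>j s. v j s - (v j s0 / v j0 s0) * v j0 s)"
    have fJ': "finite J'" using insert.prems(1) by (simp add: J'_def)
    have cJ': "card S < card J'" using insert j0 by (simp add: J'_def)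
    have sJ': "\<forall>j\<in>J'. \<forall>s. v' j s \<noteq> 0 \<longrightarrow> s \<in> S"
    proof (intro ballI allI impI)
      fix j s assume j: "j \<in> J'" and nz: "v' j s \<noteq> 0"
      show "s \<in> S"
      proof (rule ccontr)
        assume "s \<notin> S"
        moreover have "s \<noteq> s0"
        proof
          assume "s = s0" then have "v' j s = 0" using j0 by (simp add: v'_def)
          then show False using nz by simp
        qed
        ultimately have "v j s = 0" "v j0 s = 0" using insert.prems(3) j j0 by (auto simp: J'_def)
        then show False using nz by (simp add: v'_def)
      qed
    qed
    obtain l where l: "\<exists>j\<in>J'. l j \<noteq> 0" "\<forall>s. (\<Sum>j\<in>J'. l j * v' j s) = 0"
      using insert.IH[OF fJ' cJ' sJ'] insert.hyps by blast
    define L where "L = (\<lambda>j. if j = j0 then - (\<Sum>j\<in>J'. l j * (v j s0 / v j0 s0)) else l j)"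
    have "\<exists>j\<in>J. L j \<noteq> 0" using l(1) by (auto simp: L_def J'_def)
    moreover have "\<forall>s. (\<Sum>j\<in>J. L j * v j s) = 0"
    proof
      fix s
      have J: "J = insert j0 J'" "j0 \<notin> J'" using j0 by (auto simp: J'_def)
      have "(\<Sum>j\<in>J. L j * v j s) = L j0 * v j0 s + (\<Sum>j\<in>J'. l j * v j s)"
        using J fJ' by (simp add: L_def) (rule sum.cong, auto)
      also have "(\<Sum>j\<in>J'. l j * v j s) = (\<Sum>j\<in>J'. l j * v' j s) + (\<Sum>j\<in>J'. l j * (v j s0 / v j0 s0)) * v j0 s"
      proof -
        have "(\<Sum>j\<in>J'. l j * v j s) = (\<Sum>j\<in>J'. l j * v' j s + l j * (v j s0 / v j0 s0) * v j0 s)"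
          by (rule sum.cong) (auto simp: v'_def algebra_simps)
        also have "\<dots> = (\<Sum>j\<in>J'. l j * v' j s) + (\<Sum>j\<in>J'. l j * (v j s0 / v j0 s0)) * v j0 s"
          by (simp add: sum.distrib sum_distrib_right)
        finally show ?thesis .
      qed
      finally show "(\<Sum>j\<in>J. L j * v j s) = 0" using l(2) by (simp add: L_def)
    qed
    ultimately show ?thesis by blast
  qed
qed

lemma UNIV_gen: "(UNIV :: gen set) = {X, Y, H}"
  using gen.exhaust by auto

lemma finite_words: "finite {w :: gen list. length w \<le> n}"
proof -
  have "finite {xs :: gen list. set xs \<subseteq> UNIV \<and> length xs \<le> n}"
    by (rule finite_lists_length_le) (simp add: UNIV_gen)
  then show ?thesis by simp
qed

lemma growth_set_finite: "finite {card W |W. W \<subseteq> {w. length w \<le> n} \<and> indep_mod I W}"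
proof -
  have "{card W |W. W \<subseteq> {w. length w \<le> n} \<and> indep_mod I W} \<subseteq> card ` Pow {w::gen list. length w \<le> n}" by blast
  then show ?thesis by (rule finite_subset) (simp add: finite_words)
qed

lemma indep_empty: "indep_mod I {}" unfolding indep_mod_def by simp

lemma growth_ge: "W \<subseteq> {w. length w \<le> n} \<Longrightarrow> indep_mod I W \<Longrightarrow> card W \<le> growth I n"
  unfolding growth_def by (rule Max_ge[OF growth_set_finite]) blast

lemma growth_le: "(\<And>W. W \<subseteq> {w. length w \<le> n} \<Longrightarrow> indep_mod I W \<Longrightarrow> card W \<le> B) \<Longrightarrow> growth I n \<le> B"
  unfolding growth_def
  apply (rule Max.boundedI[OF growth_set_finite])
  using indep_empty by blast+

lemma upper_card:
  fixes q :: "'a::field" and f g :: "'a poly"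
  assumes df: "degree f \<le> 1" and W: "W \<subseteq> {w. length w \<le> n}" and ind: "indep_mod (ideal_gen (Hq_rels q f g)) W"
  shows "card W \<le> card (PBW (Mg g) (Mg g * n))"
proof (rule ccontr)
  let ?I = "ideal_gen (Hq_rels q f g)"
  let ?S = "PBW (Mg g) (Mg g * n)"
  assume "\<not> ?thesis"
  then have cW: "card ?S < card W" by simp
  have fW: "finite W" using W finite_words by (rule finite_subset)
  have "\<forall>w\<in>W. \<exists>c. (\<forall>u. c u \<noteq> 0 \<longrightarrow> u \<in> ?S) \<and> fa_sub (fa_word w) c \<in> ?I"
  proof
    fix w assume "w \<in> W"
    then have "length w \<le> n" using W by auto
    then have "Mg g * length w \<le> Mg g * n" by simp
    from Good_mono[OF all_words_good[OF df] this] show "\<exists>c. (\<forall>u. c u \<noteq> 0 \<longrightarrow> u \<in> ?S) \<and> fa_sub (fa_word w) c \<in> ?I"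
      unfolding Good_def by blast
  qed
  then obtain C where C: "\<forall>w\<in>W. (\<forall>u. C w u \<noteq> 0 \<longrightarrow> u \<in> ?S) \<and> fa_sub (fa_word w) (C w) \<in> ?I"
    by metis
  obtain l where l: "\<exists>j\<in>W. l j \<noteq> 0" "\<forall>s. (\<Sum>j\<in>W. l j * C j s) = 0"
    using dep_lemma[OF PBW_finite[OF Mg_ge1] fW cW, of C] C by blast
  let ?p = "lsum W (\<lambda>w. fa_smult (l w) (fa_sub (fa_word w) (C w)))"
  have pI: "?p \<in> ?I" using fW C by (intro ideal_lsum ideal_gen.smult) auto
  have pv: "?p u = (if u \<in> W then l u else 0)" for u
  proof -
    have "?p u = (\<Sum>w\<in>W. l w * (if u = w then 1 else 0)) - (\<Sum>w\<in>W. l w * C w u)"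
      unfolding lsum_def fa_smult_def fa_sub_def fa_word_def
      by (simp add: right_diff_distrib sum_subtractf)
    also have "\<dots> = (\<Sum>w\<in>W. if u = w then l u else 0)" using l(2) by (simp add: if_distrib cong: if_cong)
    also have "\<dots> = (if u \<in> W then l u else 0)" using fW by (simp add: sum.delta)
    finally show ?thesis .
  qed
  have "\<forall>w\<in>W. ?p w = 0"
    using ind pI pv unfolding indep_mod_def by (metis (no_types, lifting))
  then show False using l(1) pv by auto
qed


type_synonym 'a vec = "nat \<Rightarrow> nat \<Rightarrow> 'a poly"

definition Fit :: "'a::comm_ring_1 poly \<Rightarrow> nat \<Rightarrow> 'a poly" where
  "Fit f a = ((\<lambda>p. pcompose f p) ^^ a) [:0, 1:]"

lemma Fit_0 [simp]: "Fit f 0 = [:0,1:]" by (simp add: Fit_def)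
lemma Fit_Suc: "Fit f (Suc a) = pcompose f (Fit f a)" by (simp add: Fit_def)

lemma Fit_Suc': "Fit f (Suc a) = pcompose (Fit f a) f"
proof (induction a)
  case 0
  then show ?case by (simp add: Fit_Suc pcompose_pCons)
next
  case (Suc a)
  have e: "pcompose (Fit f a) f = pcompose f (Fit f a)" using Suc Fit_Suc by metis
  show ?case by (simp add: Fit_Suc pcompose_assoc[symmetric] e)
qed

primrec Gs :: "'a::comm_ring_1 \<Rightarrow> 'a poly \<Rightarrow> 'a poly \<Rightarrow> nat \<Rightarrow> 'a poly" where
  "Gs q f g 0 = 0"
| "Gs q f g (Suc a) = pcompose g (Fit f a) + smult q (Gs q f g a)"

definition opX :: "'a::comm_ring_1 vec \<Rightarrow> 'a vec" where
  "opX v = (\<lambda>a c. if a = 0 then 0 else v (a-1) c)"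
definition opH :: "'a::comm_ring_1 poly \<Rightarrow> 'a vec \<Rightarrow> 'a vec" where
  "opH f v = (\<lambda>a c. Fit f a * v a c)"
definition opY :: "'a::comm_ring_1 \<Rightarrow> 'a poly \<Rightarrow> 'a poly \<Rightarrow> 'a vec \<Rightarrow> 'a vec" where
  "opY q f g v = (\<lambda>a c. smult (q^a) (if c = 0 then 0 else pcompose (v a (c-1)) f) + Gs q f g (Suc a) * v (Suc a) c)"

definition opg :: "'a::comm_ring_1 \<Rightarrow> 'a poly \<Rightarrow> 'a poly \<Rightarrow> gen \<Rightarrow> 'a vec \<Rightarrow> 'a vec" where
  "opg q f g z = (case z of X \<Rightarrow> opX | H \<Rightarrow> opH f | Y \<Rightarrow> opY q f g)"

primrec rho :: "'a::comm_ring_1 \<Rightarrow> 'a poly \<Rightarrow> 'a poly \<Rightarrow> gen list \<Rightarrow> 'a vec \<Rightarrow> 'a vec" where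
  "rho q f g [] v = v"
| "rho q f g (z # w) v = opg q f g z (rho q f g w v)"

lemma rho_append: "rho q f g (u @ w) v = rho q f g u (rho q f g w v)"
  by (induction u) auto

definition vsum :: "'b set \<Rightarrow> ('b \<Rightarrow> 'a::comm_ring_1) \<Rightarrow> ('b \<Rightarrow> 'a vec) \<Rightarrow> 'a vec" where
  "vsum S k V = (\<lambda>a c. \<Sum>i\<in>S. smult (k i) (V i a c))"

lemma smult_sum_right: "smult x (sum h S) = (\<Sum>i\<in>S. smult x (h i))"
  by (induction S rule: infinite_finite_induct) (auto simp: smult_add_right)

lemma linear_opX: "opX (vsum S k V) = vsum S k (\<lambda>i. opX (V i))"
  unfolding vsum_def opX_def by (auto intro!: ext)

lemma linear_opH: "opH f (vsum S k V) = vsum S k (\<lambda>i. opH f (V i))"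
  unfolding vsum_def opH_def by (auto intro!: ext simp: sum_distrib_left)

lemma linear_opY: "opY q f g (vsum S k V) = vsum S k (\<lambda>i. opY q f g (V i))"
proof (intro ext)
  fix a c
  show "opY q f g (vsum S k V) a c = vsum S k (\<lambda>i. opY q f g (V i)) a c"
  proof (cases "c = 0")
    case True
    then show ?thesis
      by (simp add: opY_def vsum_def sum_distrib_left smult_sum_right)
  next
    case False
    then show ?thesis
      by (simp add: opY_def vsum_def sum_distrib_left smult_sum_right pcompose_sum pcompose_smult sum.distrib smult_add_right mult.commute sum_distrib_right)
  qed
qed

lemma linear_opg: "opg q f g z (vsum S k V) = vsum S k (\<lambda>i. opg q f g z (V i))"
  by (cases z) (simp_all only: opg_def gen.case linear_opX linear_opH linear_opY)

lemma linear_rho: "rho q f g w (vsum S k V) = vsum S k (\<lambda>i. rho q f g w (V i))"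
proof (induction w)
  case Nil
  then show ?case by simp
next
  case (Cons z w)
  then show ?case by (simp only: rho.simps linear_opg)
qed

lemma rho_zero: "rho q f g w (\<lambda>a c. 0) = (\<lambda>a c. 0)"
  by (induction w) (auto simp: opg_def opX_def opH_def opY_def fun_eq_iff split: gen.split)


lemma poly_sum_N: fixes x :: "'a::comm_ring_1" assumes "degree P \<le> N" shows "poly P x = (\<Sum>i\<le>N. coeff P i * x ^ i)"
proof -
  have "poly P x = (\<Sum>i\<le>degree P. coeff P i * x ^ i)" by (rule poly_altdef)
  also have "\<dots> = (\<Sum>i\<le>N. coeff P i * x ^ i)"
    by (rule sum.mono_neutral_left) (use assms in \<open>auto simp: coeff_eq_0\<close>)
  finally show ?thesis .
qed

lemma pcompose_as_sum:
  fixes p :: "'a::comm_ring_1 poly"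
  assumes "degree p \<le> N"
  shows "pcompose p r = (\<Sum>k\<le>N. smult (coeff p k) (r ^ k))"
proof -
  have d: "degree (map_poly (\<lambda>x. [:x:]) p) \<le> N"
    using degree_map_poly[of "\<lambda>x. [:x:]" p] assms by simp
  have "pcompose p r = poly (map_poly (\<lambda>x. [:x:]) p) r" by (rule pcompose_altdef)
  also have "\<dots> = (\<Sum>k\<le>N. coeff (map_poly (\<lambda>x. [:x:]) p) k * r ^ k)" by (rule poly_sum_N[OF d])
  also have "\<dots> = (\<Sum>k\<le>N. smult (coeff p k) (r ^ k))"
    by (rule sum.cong) (auto simp: coeff_map_poly)
  finally show ?thesis .
qed

definition PsiS :: "'a::comm_ring_1 \<Rightarrow> 'a poly \<Rightarrow> 'a poly \<Rightarrow> gen list set \<Rightarrow> 'a falg \<Rightarrow> 'a vec \<Rightarrow> 'a vec" where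
  "PsiS q f g S p v = vsum S p (\<lambda>w. rho q f g w v)"

lemma PsiS_extend:
  assumes "finite T" "S \<subseteq> T" "supp p \<subseteq> S"
  shows "PsiS q f g T p v = PsiS q f g S p v"
  unfolding PsiS_def vsum_def
proof (intro ext)
  fix a c
  show "(\<Sum>i\<in>T. smult (p i) (rho q f g i v a c)) = (\<Sum>i\<in>S. smult (p i) (rho q f g i v a c))"
  proof (rule sum.mono_neutral_right)
    show "\<forall>i\<in>T - S. smult (p i) (rho q f g i v a c) = 0" using assms(2,3) unfolding supp_def by (metis (mono_tags, lifting) DiffE mem_Collect_eq smult_0_left subsetD)
  qed (use assms in auto)
qed

lemma PsiS_sub: "PsiS q f g S (fa_sub p r) v = (\<lambda>a c. PsiS q f g S p v a c - PsiS q f g S r v a c)"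
  unfolding PsiS_def vsum_def fa_sub_def by (auto intro!: ext simp: smult_diff_left sum_subtractf)

lemma PsiS_add: "PsiS q f g S (fa_add p r) v = (\<lambda>a c. PsiS q f g S p v a c + PsiS q f g S r v a c)"
  unfolding PsiS_def vsum_def fa_add_def by (auto intro!: ext simp: smult_add_left sum.distrib)

lemma PsiS_smult: "PsiS q f g S (fa_smult k p) v = (\<lambda>a c. smult k (PsiS q f g S p v a c))"
  unfolding PsiS_def vsum_def fa_smult_def by (auto intro!: ext simp: smult_sum_right)

lemma PsiS_lsum_words:
  assumes "finite S" "finite \<Omega>" "u ` S \<subseteq> \<Omega>"
  shows "PsiS q f g \<Omega> (lsum S (\<lambda>s. fa_smult (k s) (fa_word (u s)))) v = vsum S k (\<lambda>s. rho q f g (u s) v)"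
  unfolding PsiS_def vsum_def lsum_def fa_smult_def fa_word_def
proof (intro ext)
  fix a c
  have "(\<Sum>w\<in>\<Omega>. smult (\<Sum>s\<in>S. k s * (if w = u s then 1 else 0)) (rho q f g w v a c))
      = (\<Sum>w\<in>\<Omega>. \<Sum>s\<in>S. (if w = u s then smult (k s) (rho q f g (u s) v a c) else 0))"
    by (rule sum.cong) (auto simp: smult_sum intro!: sum.cong)
  also have "\<dots> = (\<Sum>s\<in>S. \<Sum>w\<in>\<Omega>. (if w = u s then smult (k s) (rho q f g (u s) v a c) else 0))"
    by (rule sum.swap)
  also have "\<dots> = (\<Sum>s\<in>S. smult (k s) (rho q f g (u s) v a c))"
    by (rule sum.cong) (use assms in \<open>auto simp: sum.delta'\<close>)
  finally show "(\<Sum>w\<in>\<Omega>. smult (\<Sum>s\<in>S. k s * (if w = u s then 1 else 0)) (rho q f g w v a c)) = (\<Sum>s\<in>S. smult (k s) (rho q f g (u s) v a c))" .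
qed

lemma PsiS_word: assumes "finite \<Omega>" "u \<in> \<Omega>" shows "PsiS q f g \<Omega> (fa_word u) v = rho q f g u v"
  unfolding PsiS_def vsum_def fa_word_def
proof (intro ext)
  fix a c
  have "(\<Sum>w\<in>\<Omega>. smult (if w = u then 1 else 0) (rho q f g w v a c)) = (\<Sum>w\<in>\<Omega>. if w = u then rho q f g u v a c else 0)"
    by (rule sum.cong) auto
  also have "\<dots> = rho q f g u v a c" using assms by (simp add: sum.delta')
  finally show "(\<Sum>w\<in>\<Omega>. smult (if w = u then 1 else 0) (rho q f g w v a c)) = rho q f g u v a c" .
qed

lemma lsum_words_supp: "lsum S (\<lambda>s. fa_smult (k s) (fa_word (u s))) w \<noteq> 0 \<Longrightarrow> \<exists>s\<in>S. w = u s"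
  unfolding lsum_def fa_smult_def fa_word_def
proof (rule ccontr)
  assume "(\<Sum>s\<in>S. k s * (if w = u s then 1 else 0)) \<noteq> 0" "\<not> (\<exists>s\<in>S. w = u s)"
  then show False by simp
qed

lemma rho_Hk: "rho q f g (replicate k H) v = (\<lambda>a c. Fit f a ^ k * v a c)"
  by (induction k) (auto simp: opg_def opH_def mult.assoc)

lemma vsum_Hk: assumes "degree p \<le> N"
  shows "vsum {..N} (coeff p) (\<lambda>k. rho q f g (replicate k H) v) = (\<lambda>a c. pcompose p (Fit f a) * v a c)"
  unfolding vsum_def rho_Hk pcompose_as_sum[OF assms]
  by (auto intro!: ext simp: sum_distrib_right)


definition Psi :: "'a::comm_ring_1 \<Rightarrow> 'a poly \<Rightarrow> 'a poly \<Rightarrow> 'a falg \<Rightarrow> 'a vec \<Rightarrow> 'a vec" where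
  "Psi q f g p v = PsiS q f g (supp p) p v"

lemma PsiS_image:
  assumes "inj_on \<phi> S"
  shows "PsiS q f g (\<phi> ` S) p v = vsum S (\<lambda>t. p (\<phi> t)) (\<lambda>t. rho q f g (\<phi> t) v)"
  unfolding PsiS_def vsum_def
  by (intro ext) (simp add: sum.reindex[OF assms])

lemma vsum_cong: "(\<And>i. i \<in> S \<Longrightarrow> k i = k' i) \<Longrightarrow> (\<And>i. i \<in> S \<Longrightarrow> V i = V' i) \<Longrightarrow> vsum S k V = vsum S k' V'"
  unfolding vsum_def by (intro ext sum.cong) auto

lemma rho_lin: "vsum S k (\<lambda>i. rho q f g u (V i)) = rho q f g u (vsum S k V)"
  by (rule linear_rho[symmetric])

lemma opX_lin: "vsum S k (\<lambda>i. opX (V i)) = opX (vsum S k V)"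
  by (rule linear_opX[symmetric])

lemma finite_Omega: "finite {w :: gen list. length w \<le> L}" by (rule finite_words)

lemma fa_sub_nz: "fa_sub A B w \<noteq> 0 \<Longrightarrow> A w \<noteq> 0 \<or> B w \<noteq> 0"
  unfolding fa_sub_def by auto

lemma fa_smult_nz: "fa_smult k A w \<noteq> 0 \<Longrightarrow> A w \<noteq> 0"
  unfolding fa_smult_def by auto

lemma fa_word_nz: "fa_word u w \<noteq> (0::'a::comm_ring_1) \<Longrightarrow> w = u"
  unfolding fa_word_def by (auto split: if_splits)

context
  fixes q :: "'a::field" and f g :: "'a poly"
begin

definition "LL = degree f + degree g + 2"
abbreviation "\<Omega> \<equiv> {w :: gen list. length w \<le> LL}"

lemma rel1_eq: "fa_sub (fa_word [H, X]) (fa_mult (fa_word [X]) (fa_poly_h f)) =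
  fa_sub (fa_word [H, X]) (lsum {..degree f} (\<lambda>k. fa_smult (coeff f k) (fa_word (X # replicate k H))))"
  unfolding fa_poly_h_lsum[of f "degree f", OF order.refl] lsum_mult_word_left by simp

lemma rel2_eq: "fa_sub (fa_word [Y, H]) (fa_mult (fa_poly_h f) (fa_word [Y])) =
  fa_sub (fa_word [Y, H]) (lsum {..degree f} (\<lambda>k. fa_smult (coeff f k) (fa_word (replicate k H @ [Y]))))"
  unfolding fa_poly_h_lsum[of f "degree f", OF order.refl] lsum_mult_word_right by simp

lemma rel3_eq: "fa_sub (fa_sub (fa_word [Y, X]) (fa_smult q (fa_word [X, Y]))) (fa_poly_h g) =
  fa_sub (fa_sub (fa_word [Y, X]) (fa_smult q (fa_word [X, Y]))) (lsum {..degree g} (\<lambda>k. fa_smult (coeff g k) (fa_word (replicate k H))))"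
  unfolding fa_poly_h_lsum[of g "degree g", OF order.refl] by simp

lemma rel_kill:
  assumes "r \<in> Hq_rels q f g"
  shows "finite (supp r) \<and> (\<forall>v. Psi q f g r v = (\<lambda>a c. 0))"
proof -
  have fO: "finite \<Omega>" by (rule finite_Omega)
  have main: "supp r \<subseteq> \<Omega> \<and> (\<forall>v. PsiS q f g \<Omega> r v = (\<lambda>a c. 0))"
    using assms unfolding Hq_rels_def
  proof (elim insertE)
    assume r: "r = fa_sub (fa_word [H, X]) (fa_mult (fa_word [X]) (fa_poly_h f))"
    let ?L = "lsum {..degree f} (\<lambda>k. fa_smult (coeff f k) (fa_word (X # replicate k H)))"
    have r': "r = fa_sub (fa_word [H, X]) ?L" using r rel1_eq by simp
    have sub: "(\<lambda>k. X # replicate k H) ` {..degree f} \<subseteq> \<Omega>" by (auto simp: LL_def)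
    have "supp r \<subseteq> \<Omega>"
    proof
      fix w assume "w \<in> supp r"
      then have "fa_word [H,X] w \<noteq> (0::'a) \<or> ?L w \<noteq> 0" unfolding r' supp_def fa_sub_def by auto
      then show "w \<in> \<Omega>"
      proof
        assume "fa_word [H,X] w \<noteq> (0::'a)" then show ?thesis by (auto dest!: fa_word_nz simp: LL_def)
      next
        assume "?L w \<noteq> 0" then obtain k where "k \<in> {..degree f}" "w = X # replicate k H"
          by (auto dest!: lsum_words_supp)
        then show ?thesis using sub by auto
      qed
    qed
    moreover have "PsiS q f g \<Omega> r v = (\<lambda>a c. 0)" for v
    proof -
      have "PsiS q f g \<Omega> ?L v = vsum {..degree f} (coeff f) (\<lambda>k. rho q f g (X # replicate k H) v)"
        by (rule PsiS_lsum_words[OF _ fO sub]) simp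
      also have "\<dots> = opX (vsum {..degree f} (coeff f) (\<lambda>k. rho q f g (replicate k H) v))"
        by (simp add: opg_def opX_lin)
      also have "\<dots> = opX (\<lambda>a c. pcompose f (Fit f a) * v a c)"
        by (simp add: vsum_Hk)
      finally have 1: "PsiS q f g \<Omega> ?L v = opX (\<lambda>a c. pcompose f (Fit f a) * v a c)" .
      have 2: "PsiS q f g \<Omega> (fa_word [H,X]) v = opH f (opX v)"
        by (subst PsiS_word[OF fO]) (auto simp: LL_def opg_def)
      show ?thesis unfolding r' PsiS_sub 1 2
        by (auto intro!: ext simp: opX_def opH_def Fit_Suc[symmetric])
    qed
    ultimately show ?thesis by blast
  next
      assume r: "r = fa_sub (fa_word [Y, H]) (fa_mult (fa_poly_h f) (fa_word [Y]))"
      let ?L = "lsum {..degree f} (\<lambda>k. fa_smult (coeff f k) (fa_word (replicate k H @ [Y])))"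
      have r': "r = fa_sub (fa_word [Y, H]) ?L" using r rel2_eq by simp
      have sub: "(\<lambda>k. replicate k H @ [Y]) ` {..degree f} \<subseteq> \<Omega>" by (auto simp: LL_def)
      have "supp r \<subseteq> \<Omega>"
      proof
        fix w assume "w \<in> supp r"
        then have "fa_word [Y,H] w \<noteq> (0::'a) \<or> ?L w \<noteq> 0" unfolding r' supp_def fa_sub_def by auto
        then show "w \<in> \<Omega>"
        proof
          assume "fa_word [Y,H] w \<noteq> (0::'a)" then show ?thesis by (auto dest!: fa_word_nz simp: LL_def)
        next
          assume "?L w \<noteq> 0" then obtain k where "k \<in> {..degree f}" "w = replicate k H @ [Y]"
            by (auto dest!: lsum_words_supp)
          then show ?thesis using sub by auto
        qed
      qed
      moreover have "PsiS q f g \<Omega> r v = (\<lambda>a c. 0)" for v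
      proof -
        have "PsiS q f g \<Omega> ?L v = vsum {..degree f} (coeff f) (\<lambda>k. rho q f g (replicate k H @ [Y]) v)"
          by (rule PsiS_lsum_words[OF _ fO sub]) simp
        also have "\<dots> = vsum {..degree f} (coeff f) (\<lambda>k. rho q f g (replicate k H) (opY q f g v))"
          by (simp add: rho_append opg_def)
        also have "\<dots> = (\<lambda>a c. pcompose f (Fit f a) * opY q f g v a c)"
          by (simp add: vsum_Hk)
        finally have 1: "PsiS q f g \<Omega> ?L v = (\<lambda>a c. pcompose f (Fit f a) * opY q f g v a c)" .
        have 2: "PsiS q f g \<Omega> (fa_word [Y,H]) v = opY q f g (opH f v)"
          by (subst PsiS_word[OF fO]) (auto simp: LL_def opg_def)
        show ?thesis unfolding r' PsiS_sub 1 2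
          by (auto intro!: ext simp: opY_def opH_def Fit_Suc[symmetric] Fit_Suc'[symmetric] pcompose_mult
              distrib_left mult_ac)
      qed
      ultimately show ?thesis by blast
    next
      assume r: "r = fa_sub (fa_sub (fa_word [Y, X]) (fa_smult q (fa_word [X, Y]))) (fa_poly_h g)"
      let ?L = "lsum {..degree g} (\<lambda>k. fa_smult (coeff g k) (fa_word (replicate k H)))"
      have r': "r = fa_sub (fa_sub (fa_word [Y, X]) (fa_smult q (fa_word [X, Y]))) ?L" using r rel3_eq by simp
      have sub: "(\<lambda>k. replicate k H) ` {..degree g} \<subseteq> \<Omega>" by (auto simp: LL_def)
      have "supp r \<subseteq> \<Omega>"
      proof
        fix w assume "w \<in> supp r"
        then have "fa_word [Y,X] w \<noteq> (0::'a) \<or> fa_word [X,Y] w \<noteq> (0::'a) \<or> ?L w \<noteq> 0" unfolding r' supp_def fa_sub_def fa_smult_def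
          by auto
        then show "w \<in> \<Omega>"
        proof (elim disjE)
          assume "fa_word [Y,X] w \<noteq> (0::'a)" then show ?thesis by (auto dest!: fa_word_nz simp: LL_def)
        next
          assume "fa_word [X,Y] w \<noteq> (0::'a)" then show ?thesis by (auto dest!: fa_word_nz simp: LL_def)
        next
          assume "?L w \<noteq> 0" then obtain k where "k \<in> {..degree g}" "w = replicate k H"
            by (auto dest!: lsum_words_supp)
          then show ?thesis using sub by auto
        qed
      qed
      moreover have "PsiS q f g \<Omega> r v = (\<lambda>a c. 0)" for v
      proof -
        have "PsiS q f g \<Omega> ?L v = vsum {..degree g} (coeff g) (\<lambda>k. rho q f g (replicate k H) v)"
          by (rule PsiS_lsum_words[OF _ fO sub]) simp
        also have "\<dots> = (\<lambda>a c. pcompose g (Fit f a) * v a c)"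
          by (simp add: vsum_Hk)
        finally have 1: "PsiS q f g \<Omega> ?L v = (\<lambda>a c. pcompose g (Fit f a) * v a c)" .
        have 2: "PsiS q f g \<Omega> (fa_word [Y,X]) v = opY q f g (opX v)"
          by (subst PsiS_word[OF fO]) (auto simp: LL_def opg_def)
        have 3: "PsiS q f g \<Omega> (fa_word [X,Y]) v = opX (opY q f g v)"
          by (subst PsiS_word[OF fO]) (auto simp: LL_def opg_def)
        show ?thesis unfolding r' PsiS_sub PsiS_smult 1 2 3
        proof (intro ext)
          fix a c
          show "opY q f g (opX v) a c - smult q (opX (opY q f g v) a c) - pcompose g (Fit f a) * v a c = 0"
          proof (cases a)
            case 0
            then show ?thesis by (simp add: opY_def opX_def)
          next
            case (Suc a')
            then show ?thesis by (simp add: opY_def opX_def smult_add_right algebra_simps)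
          qed
        qed
      qed
      ultimately show ?thesis by blast
  qed simp
  have "finite (supp r)" by (rule finite_subset[OF conjunct1[OF main] fO])
  moreover have "Psi q f g r v = (\<lambda>a c. 0)" for v
  proof -
    have "Psi q f g r v = PsiS q f g \<Omega> r v"
      unfolding Psi_def by (rule PsiS_extend[OF fO conjunct1[OF main] order.refl, symmetric])
    also have "\<dots> = (\<lambda>a c. 0)" using main by blast
    finally show ?thesis .
  qed
  ultimately show ?thesis by blast
qed

end


lemma vsum_zero_fun: "(\<forall>i\<in>S. V i = (\<lambda>a c. 0)) \<Longrightarrow> vsum S k V = (\<lambda>a c. 0)"
  unfolding vsum_def by (auto intro!: ext sum.neutral)

lemma ideal_kill:
  fixes q :: "'a::field"
  assumes "p \<in> ideal_gen (Hq_rels q f g)"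
  shows "finite (supp p) \<and> (\<forall>v. Psi q f g p v = (\<lambda>a c. 0))"
  using assms
proof (induction p rule: ideal_gen.induct)
  case (rel r)
  then show ?case by (rule rel_kill)
next
  case zero
  have "supp (\<lambda>_. 0::'a) = {}" by (simp add: supp_def)
  then show ?case by (simp add: Psi_def PsiS_def vsum_def)
next
  case (add a b)
  let ?U = "supp a \<union> supp b"
  have fU: "finite ?U" using add by simp
  have s: "supp (fa_add a b) \<subseteq> ?U" by (auto simp: supp_def fa_add_def)
  have "Psi q f g (fa_add a b) v = (\<lambda>a c. 0)" for v
  proof -
    have "Psi q f g (fa_add a b) v = PsiS q f g ?U (fa_add a b) v"
      unfolding Psi_def by (rule PsiS_extend[OF fU s order.refl, symmetric])
    also have "\<dots> = (\<lambda>x c. PsiS q f g ?U a v x c + PsiS q f g ?U b v x c)" by (rule PsiS_add)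
    also have "PsiS q f g ?U a v = Psi q f g a v"
      unfolding Psi_def by (rule PsiS_extend[OF fU _ order.refl]) auto
    also have "PsiS q f g ?U b v = Psi q f g b v"
      unfolding Psi_def by (rule PsiS_extend[OF fU _ order.refl]) auto
    finally show ?thesis using add by simp
  qed
  then show ?case using finite_subset[OF s fU] by blast
next
  case (smult a k)
  have fa: "finite (supp a)" using smult by simp
  have s: "supp (fa_smult k a) \<subseteq> supp a" by (auto simp: supp_def fa_smult_def)
  have "Psi q f g (fa_smult k a) v = (\<lambda>a c. 0)" for v
  proof -
    have "Psi q f g (fa_smult k a) v = PsiS q f g (supp a) (fa_smult k a) v"
      unfolding Psi_def by (rule PsiS_extend[OF fa s order.refl, symmetric])
    also have "\<dots> = (\<lambda>x c. smult k (PsiS q f g (supp a) a v x c))" by (rule PsiS_smult)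
    also have "PsiS q f g (supp a) a v = Psi q f g a v" by (simp add: Psi_def)
    finally show ?thesis using smult by simp
  qed
  then show ?case using finite_subset[OF s fa] by blast
next
  case (lmult a u)
  have fa: "finite (supp a)" using lmult by simp
  let ?p = "fa_mult (fa_word u) a"
  have val: "?p (u @ t) = a t" for t by (simp add: fa_mult_word_left)
  have s: "supp ?p \<subseteq> (\<lambda>t. u @ t) ` supp a"
  proof
    fix w assume "w \<in> supp ?p"
    then have "length u \<le> length w \<and> take (length u) w = u" "a (drop (length u) w) \<noteq> 0"
      by (auto simp: supp_def fa_mult_word_left split: if_splits)
    then show "w \<in> (\<lambda>t. u @ t) ` supp a"
      by (intro image_eqI[of _ _ "drop (length u) w"]) (auto simp: supp_def, metis append_take_drop_id)
  qed
  have fi: "finite ((\<lambda>t. u @ t) ` supp a)" using fa by simp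
  have inj: "inj_on (\<lambda>t. u @ t) (supp a)" by (auto simp: inj_on_def)
  have "Psi q f g ?p v = (\<lambda>a c. 0)" for v
  proof -
    have "Psi q f g ?p v = PsiS q f g ((\<lambda>t. u @ t) ` supp a) ?p v"
      unfolding Psi_def by (rule PsiS_extend[OF fi s order.refl, symmetric])
    also have "\<dots> = vsum (supp a) (\<lambda>t. ?p (u @ t)) (\<lambda>t. rho q f g (u @ t) v)" by (rule PsiS_image[OF inj])
    also have "\<dots> = vsum (supp a) a (\<lambda>t. rho q f g u (rho q f g t v))"
      by (rule vsum_cong) (simp_all add: val rho_append)
    also have "\<dots> = rho q f g u (vsum (supp a) a (\<lambda>t. rho q f g t v))" by (rule rho_lin)
    also have "vsum (supp a) a (\<lambda>t. rho q f g t v) = Psi q f g a v" by (simp add: Psi_def PsiS_def)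
    finally show ?thesis using lmult rho_zero by simp
  qed
  then show ?case using finite_subset[OF s fi] by blast
next
  case (rmult a u)
  have fa: "finite (supp a)" using rmult by simp
  let ?p = "fa_mult a (fa_word u)"
  have val: "?p (t @ u) = a t" for t by (simp add: fa_mult_word_right)
  have s: "supp ?p \<subseteq> (\<lambda>t. t @ u) ` supp a"
  proof
    fix w assume "w \<in> supp ?p"
    then have "length u \<le> length w \<and> drop (length w - length u) w = u" "a (take (length w - length u) w) \<noteq> 0"
      by (auto simp: supp_def fa_mult_word_right split: if_splits)
    then show "w \<in> (\<lambda>t. t @ u) ` supp a"
      by (intro image_eqI[of _ _ "take (length w - length u) w"]) (auto simp: supp_def, metis append_take_drop_id)
  qed
  have fi: "finite ((\<lambda>t. t @ u) ` supp a)" using fa by simp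
  have inj: "inj_on (\<lambda>t. t @ u) (supp a)" by (auto simp: inj_on_def)
  have "Psi q f g ?p v = (\<lambda>a c. 0)" for v
  proof -
    have "Psi q f g ?p v = PsiS q f g ((\<lambda>t. t @ u) ` supp a) ?p v"
      unfolding Psi_def by (rule PsiS_extend[OF fi s order.refl, symmetric])
    also have "\<dots> = vsum (supp a) (\<lambda>t. ?p (t @ u)) (\<lambda>t. rho q f g (t @ u) v)" by (rule PsiS_image[OF inj])
    also have "\<dots> = vsum (supp a) a (\<lambda>t. rho q f g t (rho q f g u v))"
      by (rule vsum_cong) (simp_all add: val rho_append)
    also have "\<dots> = Psi q f g a (rho q f g u v)" by (simp add: Psi_def PsiS_def)
    finally show ?thesis using rmult by simp
  qed
  then show ?case using finite_subset[OF s fi] by blast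
qed


definition ev :: "nat \<Rightarrow> 'a::zero poly \<Rightarrow> nat \<Rightarrow> 'a vec" where
  "ev a p c = (\<lambda>a' c'. if a' = a \<and> c' = c then p else 0)"

lemma ev_inj: "ev a p c = ev a' p' c' \<Longrightarrow> p \<noteq> 0 \<Longrightarrow> a = a' \<and> p = p' \<and> c = c'"
  unfolding ev_def by (metis (full_types))

lemma indep_from_rho:
  fixes q :: "'a::field" and f g :: "'a poly"
  assumes fJ: "finite J"
    and R: "\<And>j. j \<in> J \<Longrightarrow> rho q f g (wd j) (ev 0 1 0) = ev (A j) (P j) (C j)"
    and nz: "\<And>j. j \<in> J \<Longrightarrow> P j \<noteq> 0"
    and inj: "inj_on (\<lambda>j. (A j, degree (P j), C j)) J"
  shows "inj_on wd J \<and> indep_mod (ideal_gen (Hq_rels q f g)) (wd ` J)"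
proof
  show injw: "inj_on wd J"
  proof (rule inj_onI)
    fix j j' assume j: "j \<in> J" "j' \<in> J" "wd j = wd j'"
    then have "ev (A j) (P j) (C j) = ev (A j') (P j') (C j')" using R by metis
    then have "A j = A j' \<and> P j = P j' \<and> C j = C j'" using ev_inj nz j(1) by blast
    then show "j = j'" using inj j(1,2) unfolding inj_on_def by auto
  qed
  show "indep_mod (ideal_gen (Hq_rels q f g)) (wd ` J)"
    unfolding indep_mod_def
  proof (intro allI impI ballI)
    fix cf :: "'a falg" and w
    assume out: "\<forall>w. w \<notin> wd ` J \<longrightarrow> cf w = 0" and cI: "cf \<in> ideal_gen (Hq_rels q f g)" and w: "w \<in> wd ` J"
    have k: "\<forall>v. Psi q f g cf v = (\<lambda>a c. 0)" using ideal_kill[OF cI] by blast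
    have fW: "finite (wd ` J)" using fJ by simp
    have sW: "supp cf \<subseteq> wd ` J" using out by (auto simp: supp_def)
    have "PsiS q f g (wd ` J) cf (ev 0 1 0) = (\<lambda>a c. 0)"
      using PsiS_extend[OF fW sW order.refl] k unfolding Psi_def by simp
    moreover have "PsiS q f g (wd ` J) cf (ev 0 1 0) = vsum J (\<lambda>j. cf (wd j)) (\<lambda>j. ev (A j) (P j) (C j))"
      unfolding PsiS_image[OF injw] by (rule vsum_cong) (simp_all add: R)
    ultimately have Z: "\<And>a c. (\<Sum>j\<in>J. smult (cf (wd j)) (ev (A j) (P j) (C j) a c)) = 0"
      unfolding vsum_def by metis
    show "cf w = 0"
    proof (rule ccontr)
      assume cw: "cf w \<noteq> 0"
      obtain j0 where j0: "j0 \<in> J" "w = wd j0" using w by blast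
      define T where "T = {j\<in>J. A j = A j0 \<and> C j = C j0 \<and> cf (wd j) \<noteq> 0}"
      have fT: "finite T" using fJ by (simp add: T_def)
      have j0T: "j0 \<in> T" using j0 cw by (simp add: T_def)
      define D where "D = Max ((\<lambda>j. degree (P j)) ` T)"
      have "D \<in> (\<lambda>j. degree (P j)) ` T" unfolding D_def using fT j0T by (intro Max_in) auto
      then obtain j1 where j1: "j1 \<in> T" "degree (P j1) = D" by blast
      have Dmax: "\<And>j. j \<in> T \<Longrightarrow> degree (P j) \<le> D" unfolding D_def using fT by auto
      have "coeff (\<Sum>j\<in>J. smult (cf (wd j)) (ev (A j) (P j) (C j) (A j0) (C j0))) D
          = (\<Sum>j\<in>J. if j = j1 then cf (wd j1) * lead_coeff (P j1) else 0)"
        unfolding coeff_sum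
      proof (rule sum.cong[OF refl])
        fix j assume jJ: "j \<in> J"
        show "coeff (smult (cf (wd j)) (ev (A j) (P j) (C j) (A j0) (C j0))) D = (if j = j1 then cf (wd j1) * lead_coeff (P j1) else 0)"
        proof (cases "j = j1")
          case True
          then show ?thesis using j1 by (simp add: ev_def T_def)
        next
          case False
          show ?thesis
          proof (cases "j \<in> T")
            case True
            have "degree (P j) \<noteq> D"
            proof
              assume "degree (P j) = D"
              then have "(A j, degree (P j), C j) = (A j1, degree (P j1), C j1)" using True j1 by (simp add: T_def)
              then have "j = j1" using inj True j1(1) unfolding inj_on_def T_def by blast
              then show False using False by simp
            qed
            then have "degree (P j) < D" using Dmax[OF True] by simp
            then show ?thesis using False True by (simp add: ev_def T_def coeff_eq_0)
          next
            case False2: False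
            then show ?thesis using False jJ by (auto simp: ev_def T_def)
          qed
        qed
      qed
      also have "\<dots> = cf (wd j1) * lead_coeff (P j1)" using j1(1) fJ by (simp add: T_def)
      finally have "cf (wd j1) * lead_coeff (P j1) = 0" using Z by simp
      moreover have "cf (wd j1) \<noteq> 0" "P j1 \<noteq> 0" using j1(1) nz by (auto simp: T_def)
      ultimately show False by simp
    qed
  qed
qed

lemma opX_ev: "opX (ev a p c) = ev (Suc a) p c"
  unfolding opX_def ev_def by (auto intro!: ext)

lemma rho_X: "rho q f g (replicate k X) (ev a p c) = ev (a + k) p c"
  by (induction k) (auto simp: opg_def opX_ev)

lemma rho_H: "rho q f g (replicate k H) (ev a p c) = ev a (Fit f a ^ k * p) c"
  unfolding rho_Hk ev_def by (auto intro!: ext)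

lemma opY_ev: "opY q f g (ev 0 1 c) = ev 0 1 (Suc c)"
  unfolding opY_def ev_def by (auto intro!: ext simp: pcompose_1)

lemma rho_Y: "rho q f g (replicate c Y) (ev 0 1 0) = ev 0 1 c"
  by (induction c) (auto simp: opg_def opY_ev)

lemma rho_pbw: "rho q f g (pbw a b c) (ev 0 1 0) = ev a ([:0,1:] ^ b) c"
  unfolding pbw_def rho_append rho_Y rho_H rho_X by simp


lemma degree_X_pow: "degree ([:0,1:] ^ b :: 'a::field poly) = b"
  by (simp add: degree_power_eq)

lemma growth_lower3:
  fixes q :: "'a::field" and f g :: "'a poly"
  shows "(n div 3)^3 \<le> growth (ideal_gen (Hq_rels q f g)) n"
proof -
  define k where "k = n div 3"
  define J where "J = {..<k} \<times> {..<k} \<times> {..<k}"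
  define wd where "wd = (\<lambda>(a,b,c). pbw a b c)"
  have fJ: "finite J" by (simp add: J_def)
  have "inj_on wd J \<and> indep_mod (ideal_gen (Hq_rels q f g)) (wd ` J)"
  proof (rule indep_from_rho[OF fJ, where A = "\<lambda>(a,b,c). a" and P = "\<lambda>(a,b,c). [:0,1:] ^ b" and C = "\<lambda>(a,b,c). c"])
    fix j assume "j \<in> J"
    show "rho q f g (wd j) (ev 0 1 0) = ev ((\<lambda>(a,b,c). a) j) ((\<lambda>(a,b,c). [:0,1:] ^ b) j) ((\<lambda>(a,b,c). c) j)"
      by (cases j) (simp add: wd_def rho_pbw)
    show "(\<lambda>(a,b,c). [:0,1:] ^ b) j \<noteq> (0::'a poly)" by (cases j) simp
  next
    show "inj_on (\<lambda>j. ((\<lambda>(a,b,c). a) j, degree ((\<lambda>(a,b,c). [:0,1:] ^ b :: 'a poly) j), (\<lambda>(a,b,c). c) j)) J"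
      by (auto simp: inj_on_def degree_X_pow)
  qed
  then have inj: "inj_on wd J" and ind: "indep_mod (ideal_gen (Hq_rels q f g)) (wd ` J)" by auto
  have sub: "wd ` J \<subseteq> {w. length w \<le> n}"
  proof
    fix w assume "w \<in> wd ` J"
    then obtain a b c where "a < k" "b < k" "c < k" "w = pbw a b c" by (auto simp: J_def wd_def)
    then have "length w \<le> 3 * k" by (simp add: pbw_def)
    also have "3 * k \<le> n" by (simp add: k_def)
    finally show "w \<in> {w. length w \<le> n}" by simp
  qed
  have "card (wd ` J) = k^3" using card_image[OF inj] by (simp add: J_def card_cartesian_product power3_eq_cube)
  then show ?thesis using growth_ge[OF sub ind] by (simp add: k_def)
qed

lemma growth_upper3:
  fixes q :: "'a::field" and f g :: "'a poly"
  assumes "degree f \<le> 1"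
  shows "growth (ideal_gen (Hq_rels q f g)) n \<le> (Mg g * n + 1)^3"
proof (rule growth_le)
  fix W assume "W \<subseteq> {w. length w \<le> n}" "indep_mod (ideal_gen (Hq_rels q f g)) W"
  from upper_card[OF assms this] show "card W \<le> (Mg g * n + 1)^3"
    using PBW_card[OF Mg_ge1, of g "Mg g * n"] by linarith
qed

lemma degree_Fit: "degree (Fit f j) = degree f ^ j"
  for f :: "'a::field poly"
  by (induction j) (simp_all add: Fit_Suc degree_pcompose)

lemma growth_lower4:
  fixes q :: "'a::field" and f g :: "'a poly"
  assumes df: "degree f \<ge> 2"
  shows "(n div 6)^4 \<le> growth (ideal_gen (Hq_rels q f g)) n"
proof -
  define m where "m = n div 6"
  define d where "d = degree f"
  define B where "B = d ^ m"
  have mB: "m \<le> B"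
  proof -
    have "m < 2 ^ m" by (rule less_exp)
    also have "2 ^ m \<le> d ^ m" using df by (simp add: d_def power_mono)
    finally show ?thesis by (simp add: B_def)
  qed
  have Fnz: "Fit f j \<noteq> 0" for j
  proof
    assume "Fit f j = 0"
    then have "degree (Fit f j) = 0" by simp
    moreover have "degree (Fit f j) \<ge> 1" using df by (simp add: degree_Fit)
    ultimately show False by simp
  qed
  define J where "J = {..<m} \<times> {..<m} \<times> {..<m} \<times> {..<m}"
  define wd where "wd = (\<lambda>(b1,b2,b3,c). replicate b1 H @ replicate m X @ replicate b2 H @ replicate m X @ replicate b3 H @ replicate c Y)"
  define PP where "PP = (\<lambda>(b1::nat,b2::nat,b3::nat,c::nat). Fit f (m + m) ^ b1 * (Fit f m ^ b2 * (Fit f 0 ^ b3 * 1)))"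
  have fJ: "finite J" by (simp add: J_def)
  have degPP: "degree (PP (b1,b2,b3,c)) = (b1 * B + b2) * B + b3" for b1 b2 b3 c
    using Fnz by (simp add: PP_def degree_mult_eq degree_power_eq degree_Fit B_def d_def power_add algebra_simps)
  have "inj_on wd J \<and> indep_mod (ideal_gen (Hq_rels q f g)) (wd ` J)"
  proof (rule indep_from_rho[OF fJ, where A = "\<lambda>_. m + m" and P = PP and C = "\<lambda>(b1,b2,b3,c). c"])
    fix j assume "j \<in> J"
    show "rho q f g (wd j) (ev 0 1 0) = ev (m + m) (PP j) ((\<lambda>(b1,b2,b3,c). c) j)"
      by (cases j) (simp add: wd_def PP_def rho_append rho_Y rho_H rho_X)
    show "PP j \<noteq> 0" using Fnz by (cases j) (simp add: PP_def)
  next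
    show "inj_on (\<lambda>j. (m + m, degree (PP j), (\<lambda>(b1,b2,b3,c). c) j)) J"
    proof (rule inj_onI)
      fix x y assume x: "x \<in> J" and y: "y \<in> J" and e: "(m + m, degree (PP x), (\<lambda>(b1,b2,b3,c). c) x) = (m + m, degree (PP y), (\<lambda>(b1,b2,b3,c). c) y)"
      obtain x1 x2 x3 x4 where xs: "x = (x1,x2,x3,x4)" by (cases x) auto
      obtain y1 y2 y3 y4 where ys: "y = (y1,y2,y3,y4)" by (cases y) auto
      have lt: "x1 < B" "x2 < B" "x3 < B" "y1 < B" "y2 < B" "y3 < B"
        using x y mB by (auto simp: xs ys J_def)
      have E: "(x1 * B + x2) * B + x3 = (y1 * B + y2) * B + y3" "x4 = y4"
        using e by (simp_all add: xs ys degPP)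
      have e3: "x3 = y3" using arg_cong[OF E(1), of "\<lambda>t. t mod B"] lt by simp
      have "x1 * B + x2 = y1 * B + y2" using arg_cong[OF E(1), of "\<lambda>t. t div B"] lt by simp
      then have E2: "x1 * B + x2 = y1 * B + y2" .
      have "x2 = (x1 * B + x2) mod B" "y2 = (y1 * B + y2) mod B" using lt by simp_all
      then have "x2 = y2" using E2 by simp
      moreover have "x1 = (x1 * B + x2) div B" "y1 = (y1 * B + y2) div B" using lt by simp_all
      then have "x1 = y1" using E2 by simp
      ultimately show "x = y" using E(2) e3 by (simp add: xs ys)
    qed
  qed
  then have inj: "inj_on wd J" and ind: "indep_mod (ideal_gen (Hq_rels q f g)) (wd ` J)" by auto
  have sub: "wd ` J \<subseteq> {w. length w \<le> n}"
  proof
    fix w assume "w \<in> wd ` J"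
    then obtain b1 b2 b3 c where "b1 < m" "b2 < m" "b3 < m" "c < m" "w = wd (b1,b2,b3,c)" by (auto simp: J_def)
    then have "length w \<le> 6 * m" by (simp add: wd_def)
    also have "6 * m \<le> n" by (simp add: m_def)
    finally show "w \<in> {w. length w \<le> n}" by simp
  qed
  have "card (wd ` J) = m^4" using card_image[OF inj] by (simp add: J_def card_cartesian_product power4_eq_xxxx)
  then show ?thesis using growth_ge[OF sub ind] by (simp add: m_def)
qed


lemma div_real_ge: assumes "k > 0" shows "real (n div k) \<ge> (real n - real k + 1) / real k"
proof -
  have e1: "real n = real k * real (n div k) + real (n mod k)"
    by (metis mult_div_mod_eq of_nat_add of_nat_mult)
  have "n mod k < k" using assms by simp
  then have "n mod k + 1 \<le> k" by simp
  then have "real (n mod k) + 1 \<le> real k" by (metis of_nat_1 of_nat_add of_nat_le_iff)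
  then have "real n \<le> real k * real (n div k) + real k - 1" using e1 by linarith
  then show ?thesis using assms by (simp add: field_simps)
qed

lemma ln_lower:
  fixes G :: "nat \<Rightarrow> nat"
  assumes k: "k > 0" and e: "e > 0" and G: "\<And>n. (n div k) ^ e \<le> G n"
  shows "eventually (\<lambda>n. real e * ln ((real n - real k + 1) / real k) / ln (real n) \<le> ln (real (G n)) / ln (real n)) sequentially"
  using eventually_ge_at_top[of "2 * k + 2"]
proof eventually_elim
  case (elim n)
  have pos: "(real n - real k + 1) / real k > 0" using elim k by auto
  have le1: "(real n - real k + 1) / real k \<le> real (n div k)" by (rule div_real_ge[OF k])
  then have "real (n div k) > 0" using pos by linarith
  then have "real ((n div k) ^ e) > 0" by simp
  have "real e * ln ((real n - real k + 1) / real k) = ln (((real n - real k + 1) / real k) ^ e)"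
    using pos by (simp add: ln_realpow)
  also have "\<dots> \<le> ln (real (n div k) ^ e)"
    using pos le1 by (simp add: power_mono)
  also have "\<dots> \<le> ln (real (G n))"
  proof -
    have "real (n div k) ^ e \<le> real (G n)" using G[of n] by (metis of_nat_le_iff of_nat_power)
    moreover have "real (n div k) ^ e > 0" using \<open>real (n div k) > 0\<close> by simp
    moreover have "0 < G n" using G[of n] \<open>real (n div k) > 0\<close> by (meson less_le_trans of_nat_0_less_iff zero_less_power)
    ultimately show ?thesis by (subst ln_le_cancel_iff) auto
  qed
  finally have "real e * ln ((real n - real k + 1) / real k) \<le> ln (real (G n))" .
  moreover have "ln (real n) > 0" using elim k by simp
  ultimately show ?case by (simp add: divide_right_mono)
qed

lemma ln_at_top_nat: "filterlim (\<lambda>n. ln (real n)) at_top sequentially"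
  by real_asymp

lemma lower_lim: assumes "k > 0"
  shows "((\<lambda>n. real e * ln ((real n - real k + 1) / real k) / ln (real n)) \<longlongrightarrow> real e) sequentially"
proof -
  have "((\<lambda>n. real e * (ln (real n - real k + 1) / ln (real n)) - real e * (ln (real k) / ln (real n))) \<longlongrightarrow> real e * 1 - real e * 0) sequentially"
  proof (intro tendsto_intros)
    show "((\<lambda>n. ln (real n - real k + 1) / ln (real n)) \<longlongrightarrow> 1) sequentially"
      using assms by real_asymp
    show "((\<lambda>n. ln (real k) / ln (real n)) \<longlongrightarrow> 0) sequentially"
      by (rule tendsto_divide_0[OF tendsto_const filterlim_at_top_imp_at_infinity[OF ln_at_top_nat]])
  qed
  moreover have "eventually (\<lambda>n. real e * (ln (real n - real k + 1) / ln (real n)) - real e * (ln (real k) / ln (real n))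
      = real e * ln ((real n - real k + 1) / real k) / ln (real n)) sequentially"
    using eventually_ge_at_top[of "k + 1"]
  proof eventually_elim
    case (elim n)
    then have "real n - real k + 1 > 0" by linarith
    then show ?case using assms by (simp add: ln_div diff_divide_distrib right_diff_distrib)
  qed
  ultimately show ?thesis by (simp add: tendsto_cong)
qed

lemma upper_lim: "((\<lambda>n. 3 * ln (real M + 1) / ln (real n) + 3) \<longlongrightarrow> 3) sequentially"
proof -
  have "((\<lambda>n. 3 * ln (real M + 1) / ln (real n) + 3) \<longlongrightarrow> 0 + 3) sequentially"
    by (intro tendsto_intros tendsto_divide_0[OF tendsto_const filterlim_at_top_imp_at_infinity[OF ln_at_top_nat]])
  then show ?thesis by simp
qed

lemma ln_upper:
  fixes G :: "nat \<Rightarrow> nat"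
  assumes G: "\<And>n. G n \<le> (M * n + 1) ^ 3"
  shows "eventually (\<lambda>n. ln (real (G n)) / ln (real n) \<le> 3 * ln (real M + 1) / ln (real n) + 3) sequentially"
  using eventually_ge_at_top[of "2"]
proof eventually_elim
  case (elim n)
  have lnpos: "ln (real n) > 0" using elim by simp
  have "ln (real (G n)) \<le> 3 * ln (real M + 1) + 3 * ln (real n)"
  proof (cases "G n = 0")
    case True
    then show ?thesis using lnpos by simp
  next
    case False
    have "real (G n) \<le> (real M * real n + 1) ^ 3" using G[of n] by (metis of_nat_le_iff of_nat_power of_nat_mult of_nat_add of_nat_1)
    also have "\<dots> \<le> ((real M + 1) * real n) ^ 3"
      using elim by (intro power_mono) (auto simp: algebra_simps)
    finally have "ln (real (G n)) \<le> ln (((real M + 1) * real n) ^ 3)" using False elim by (subst ln_le_cancel_iff) auto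
    also have "\<dots> = 3 * ln (real M + 1) + 3 * ln (real n)"
      using elim by (simp add: ln_realpow ln_mult)
    finally show ?thesis .
  qed
  then have "ln (real (G n)) / ln (real n) \<le> (3 * ln (real M + 1) + 3 * ln (real n)) / ln (real n)"
    using lnpos by (intro divide_right_mono) auto
  also have "\<dots> = 3 * ln (real M + 1) / ln (real n) + 3" using lnpos by (simp add: add_divide_distrib)
  finally show ?case .
qed


theorem proposition2p3:
  fixes q :: "'a::field" and f g :: "'a poly"
  shows "(GKdim_Hq q f g = 3 \<longleftrightarrow> degree f \<le> 1) \<and>
         (degree f > 1 \<longrightarrow> GKdim_Hq q f g \<ge> 4)"
proof -
  define G where "G = growth (ideal_gen (Hq_rels q f g))"
  define r where "r = (\<lambda>n. ln (real (G n)) / ln (real n))"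
  have GK: "GKdim_Hq q f g = limsup (\<lambda>n. ereal (r n))"
    unfolding GKdim_Hq_def GKdim_pres_def r_def G_def by simp
  have case1: "GKdim_Hq q f g = 3" if df: "degree f \<le> 1"
  proof -
    have lo: "eventually (\<lambda>n. real 3 * ln ((real n - real 3 + 1) / real 3) / ln (real n) \<le> r n) sequentially"
      unfolding r_def by (rule ln_lower) (auto simp: G_def growth_lower3)
    have up: "eventually (\<lambda>n. r n \<le> 3 * ln (real (Mg g) + 1) / ln (real n) + 3) sequentially"
      unfolding r_def by (rule ln_upper) (unfold G_def, rule growth_upper3[OF df])
    have "(r \<longlongrightarrow> real 3) sequentially"
      by (rule tendsto_sandwich[OF lo up lower_lim]) (use upper_lim in auto)
    then have "((\<lambda>n. ereal (r n)) \<longlongrightarrow> ereal 3) sequentially" by (simp add: tendsto_ereal)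
    then have "limsup (\<lambda>n. ereal (r n)) = ereal 3" by (rule lim_imp_Limsup[OF trivial_limit_sequentially])
    then show ?thesis using GK by (simp add: numeral_eq_ereal)
  qed
  have case2: "GKdim_Hq q f g \<ge> 4" if df: "degree f > 1"
  proof -
    have lo: "eventually (\<lambda>n. real 4 * ln ((real n - real 6 + 1) / real 6) / ln (real n) \<le> r n) sequentially"
      unfolding r_def by (rule ln_lower) (use df in \<open>auto simp: G_def growth_lower4\<close>)
    have "((\<lambda>n. real 4 * ln ((real n - real 6 + 1) / real 6) / ln (real n)) \<longlongrightarrow> real 4) sequentially"
      by (rule lower_lim) simp
    then have "((\<lambda>n. ereal (real 4 * ln ((real n - real 6 + 1) / real 6) / ln (real n))) \<longlongrightarrow> ereal 4) sequentially"
      by (simp add: tendsto_ereal)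
    then have "limsup (\<lambda>n. ereal (real 4 * ln ((real n - real 6 + 1) / real 6) / ln (real n))) = ereal 4"
      by (rule lim_imp_Limsup[OF trivial_limit_sequentially])
    moreover have "limsup (\<lambda>n. ereal (real 4 * ln ((real n - real 6 + 1) / real 6) / ln (real n))) \<le> limsup (\<lambda>n. ereal (r n))"
      by (rule Limsup_mono) (use lo in \<open>auto elim!: eventually_mono\<close>)
    ultimately show ?thesis using GK by (simp add: numeral_eq_ereal)
  qed
  show ?thesis
  proof (intro conjI impI)
    show "GKdim_Hq q f g = 3 \<longleftrightarrow> degree f \<le> 1"
    proof
      assume "GKdim_Hq q f g = 3"
      then show "degree f \<le> 1" using case2 by (cases "degree f \<le> 1") (auto simp: numeral_eq_ereal)
    next
      assume "degree f \<le> 1" then show "GKdim_Hq q f g = 3" by (rule case1)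
    qed
  next
    assume "degree f > 1" then show "GKdim_Hq q f g \<ge> 4" by (rule case2)
  qed
qed


end
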